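(* There is a constant $C$ depending only on $D$ such that for every $w,z\in\mathbb{S}^D_+$ and every $\pi\in\Pi(z+w)$ there exists $\pi'\in\Pi(z)$ with $\displaystyle\int_0^1|\pi(s)-\pi'(s)|\,ds\le C\,K(z,|w|).$
   Context: $\mathbb{S}^D$ is the space of real symmetric $D\times D$ matrices with entrywise inner product $a\cdot b=\sum_{i,j}a_{ij}b_{ij}$ and norm $|a|=\sqrt{a\cdot a}$; $\mathbb{S}^D_+$ is the set of positive semidefinite ones; $a\succeq b$ means $a\cdot c\ge b\cdot c$ for all $c\in\mathbb{S}^D_+$. $\Pi$ is the set of left-continuous maps $\pi:[0,1]\to\mathbb{S}^D_+$ with $\pi(s')\succeq\pi(s)$ for $s'\ge s$, and $\Pi(z)=\{\pi\in\Pi:\pi(1)=z\}$. For $z\in\mathbb{S}^D_+\setminus\{0\}$, $m(z)$ denotes the smallest positive eigenvalue of $z$. For $z\in\mathbb{S}^D_+$ and $r\ge0$, $K(z,r)=(|z|+r)\big(1+|z|^{1/2}m(z)^{-1/2}\big)m(z)^{-1/2}r^{1/2}+\sqrt{(|z|+r)r}$ if $z\neq0$, and $K(0,r)=r$. *)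

theory Defs
  imports "HOL-Analysis.Analysis"
begin

text \<open>Real D x D matrices are represented as real^'n^'n, with D = CARD('n).\<close>

definition sym_mat :: "real^'n^'n \<Rightarrow> bool" where
  "sym_mat a \<longleftrightarrow> transpose a = a"

definition frob_inner :: "real^'n^'n \<Rightarrow> real^'n^'n \<Rightarrow> real" where
  "frob_inner a b = (\<Sum>i\<in>UNIV. \<Sum>j\<in>UNIV. a$i$j * b$i$j)"

definition frob_norm :: "real^'n^'n \<Rightarrow> real" where
  "frob_norm a = sqrt (frob_inner a a)"

definition psd :: "real^'n^'n \<Rightarrow> bool" where
  "psd a \<longleftrightarrow> sym_mat a \<and> (\<forall>x. 0 \<le> x \<bullet> (a *v x))"

definition psd_ge :: "real^'n^'n \<Rightarrow> real^'n^'n \<Rightarrow> bool" where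
  "psd_ge a b \<longleftrightarrow> (\<forall>c. psd c \<longrightarrow> frob_inner b c \<le> frob_inner a c)"

definition paths :: "(real \<Rightarrow> real^'n^'n) set" where
  "paths = {\<pi>. (\<forall>s\<in>{0..1}. psd (\<pi> s))
      \<and> (\<forall>s\<in>{0<..1}. (\<pi> \<longlongrightarrow> \<pi> s) (at s within {0..<s}))
      \<and> (\<forall>s s'. 0 \<le> s \<and> s \<le> s' \<and> s' \<le> 1 \<longrightarrow> psd_ge (\<pi> s') (\<pi> s))}"

definition paths_to :: "real^'n^'n \<Rightarrow> (real \<Rightarrow> real^'n^'n) set" where
  "paths_to z = {\<pi>\<in>paths. \<pi> 1 = z}"

definition is_eigenvalue :: "real^'n^'n \<Rightarrow> real \<Rightarrow> bool" where
  "is_eigenvalue a l \<longleftrightarrow> (\<exists>x. x \<noteq> 0 \<and> a *v x = l *\<^sub>R x)"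

definition min_pos_eig :: "real^'n^'n \<Rightarrow> real" where
  "min_pos_eig z = Inf {l. 0 < l \<and> is_eigenvalue z l}"

definition Kfun :: "real^'n^'n \<Rightarrow> real \<Rightarrow> real" where
  "Kfun z r = (if z = 0 then r else
     (frob_norm z + r) * (1 + sqrt (frob_norm z) / sqrt (min_pos_eig z))
        * sqrt r / sqrt (min_pos_eig z)
     + sqrt ((frob_norm z + r) * r))"

end

theory Submission
  imports Defs
begin

lemma frob_inner_eq: "frob_inner a b = inner a b"
  by (simp add: frob_inner_def inner_vec_def)

lemma frob_norm_eq: "frob_norm a = norm a"
  by (simp add: frob_norm_def frob_inner_eq norm_eq_sqrt_inner)

lemma sym_dot:
  assumes "sym_mat a"
  shows "x \<bullet> (a *v y) = y \<bullet> (a *v x)"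
proof -
  have "x \<bullet> (a *v y) = (x v* a) \<bullet> y" by (simp add: dot_lmul_matrix)
  also have "x v* a = transpose a *v x" by simp
  also have "\<dots> = a *v x" using assms by (simp add: sym_mat_def)
  finally show ?thesis by (simp add: inner_commute)
qed

lemma quad_expand:
  fixes c :: "real^'n^'n"
  assumes "sym_mat c"
  shows "(x + t *\<^sub>R y) \<bullet> (c *v (x + t *\<^sub>R y)) = x \<bullet> (c *v x) + 2 * t * (y \<bullet> (c *v x)) + t^2 * (y \<bullet> (c *v y))"
  using sym_dot[OF assms, of x y]
  by (simp add: matrix_vector_right_distrib matrix_vector_mult_scaleR inner_add_left inner_add_right algebra_simps power2_eq_square)

lemma quad_lemma:
  fixes a b :: real
  assumes "\<And>t. 0 \<le> 2*t*b + t^2*a" "0 \<le> a"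
  shows "b = 0"
proof (rule ccontr)
  assume "b \<noteq> 0"
  define t where "t = - b / (a+1)"
  have "0 \<le> 2*t*b + t^2*a" by fact
  hence "0 \<le> (a+1)^2 * (2*t*b + t^2*a)" using assms(2) by simp
  also have "(a+1)^2 * (2*t*b + t^2*a) = -(b^2 * (a + 2))"
  proof -
    have "a + 1 \<noteq> 0" using assms(2) by simp
    then have h: "(a+1)*t = -b" by (simp add: t_def)
    have "(a+1)^2 * (2*t*b + t^2*a) = 2*b*(a+1)*((a+1)*t) + ((a+1)*t)^2*a"
      by (simp add: algebra_simps power2_eq_square)
    also have "\<dots> = 2*b*(a+1)*(-b) + (-b)^2*a" by (simp only: h)
    also have "\<dots> = -(b^2*(a+2))" by (simp add: algebra_simps power2_eq_square)
    finally show ?thesis .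
  qed
  finally have "b^2 * (a+2) \<le> 0" by simp
  moreover have "0 < b^2 * (a+2)" using \<open>b \<noteq> 0\<close> assms(2) by simp
  ultimately show False by simp
qed

lemma psd_quad: "psd c \<Longrightarrow> 0 \<le> x \<bullet> (c *v x)"
  by (simp add: psd_def)

lemma psd_sym: "psd c \<Longrightarrow> sym_mat c"
  by (simp add: psd_def)

lemma quad_zero:
  assumes "psd c" "x \<bullet> (c *v x) = 0"
  shows "c *v x = 0"
proof -
  have "y \<bullet> (c *v x) = 0" for y
  proof (rule quad_lemma)
    fix t
    have "0 \<le> (x + t *\<^sub>R y) \<bullet> (c *v (x + t *\<^sub>R y))" using assms(1) by (simp add: psd_def)
    then show "0 \<le> 2*t*(y \<bullet> (c *v x)) + t^2*(y \<bullet> (c *v y))"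
      using quad_expand[OF psd_sym[OF assms(1)], of x t y] assms(2) by simp
  qed (use assms in \<open>simp add: psd_def\<close>)
  from this[of "c *v x"] show ?thesis by simp
qed

lemma psd_cs:
  assumes "psd c"
  shows "(x \<bullet> (c *v y))^2 \<le> (x \<bullet> (c *v x)) * (y \<bullet> (c *v y))"
proof (cases "y \<bullet> (c *v y) = 0")
  case True
  then show ?thesis using quad_zero[OF assms True] by simp
next
  case False
  define C where "C = y \<bullet> (c *v y)"
  have C: "0 < C" using False psd_quad[OF assms, of y] by (simp add: C_def)
  define t where "t = - (x \<bullet> (c *v y)) / C"
  have "0 \<le> (x + t *\<^sub>R y) \<bullet> (c *v (x + t *\<^sub>R y))" using psd_quad[OF assms] .
  also have "\<dots> = x \<bullet> (c *v x) + 2 * t * (y \<bullet> (c *v x)) + t^2 * C"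
    using quad_expand[OF psd_sym[OF assms]] by (simp add: C_def)
  also have "y \<bullet> (c *v x) = x \<bullet> (c *v y)" using sym_dot[OF psd_sym[OF assms]] by simp
  finally have "0 \<le> x \<bullet> (c *v x) - (x \<bullet> (c *v y))^2 / C"
    using C by (simp add: t_def field_simps power2_eq_square)
  then have "(x \<bullet> (c *v y))^2 / C \<le> x \<bullet> (c *v x)" by simp
  then show ?thesis using C by (simp add: C_def[symmetric] divide_le_eq mult.commute)
qed

definition outer :: "real^'n \<Rightarrow> real^'n \<Rightarrow> real^'n^'n" where
  "outer v w = (\<chi> i j. v$i * w$j)"

lemma outer_mult: "outer v w *v x = (w \<bullet> x) *\<^sub>R v"
  by (simp add: outer_def matrix_vector_mult_def inner_vec_def vec_eq_iff sum_distrib_left algebra_simps)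

lemma inner_outer: "a \<bullet> outer v w = v \<bullet> (a *v w)"
  by (simp add: outer_def matrix_vector_mult_def inner_vec_def sum_distrib_left algebra_simps)

lemma psd_outer: "psd (outer v v)"
  unfolding psd_def
proof
  show "sym_mat (outer v v)"
    by (auto simp: sym_mat_def transpose_def outer_def vec_eq_iff mult.commute)
  show "\<forall>x. 0 \<le> x \<bullet> (outer v v *v x)"
    by (simp add: outer_mult inner_commute)
qed

lemma scaleR_mat_vec: "((k::real) *\<^sub>R (A::real^'n^'m)) *v x = k *\<^sub>R (A *v x)"
  by (simp add: vec_eq_iff matrix_vector_mult_def sum_distrib_left mult.assoc)

lemma sym_mat_diff: "sym_mat a \<Longrightarrow> sym_mat b \<Longrightarrow> sym_mat (a - b)"
  by (simp add: sym_mat_def transpose_def vec_eq_iff)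

lemma sym_mat_add: "sym_mat a \<Longrightarrow> sym_mat b \<Longrightarrow> sym_mat (a + b)"
  by (simp add: sym_mat_def transpose_def vec_eq_iff)

lemma sym_mat_scale: "sym_mat a \<Longrightarrow> sym_mat (k *\<^sub>R a)"
  by (simp add: sym_mat_def transpose_def vec_eq_iff)

lemma psd_dual:
  fixes a c :: "real^'n^'n"
  assumes "psd a" "psd c"
  shows "0 \<le> a \<bullet> c"
  using assms(2)
proof (induction "dim (range (\<lambda>x. c *v x))" arbitrary: c rule: less_induct)
  case less
  show ?case
  proof (cases "\<forall>u. u \<bullet> (c *v u) = 0")
    case True
    then have "c = 0" using quad_zero[OF less.prems] by (simp add: matrix_eq)
    then show ?thesis by simp
  next
    case False
    then obtain u where "u \<bullet> (c *v u) \<noteq> 0" by blast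
    define \<alpha> where "\<alpha> = u \<bullet> (c *v u)"
    have al: "0 < \<alpha>" using \<open>u \<bullet> (c *v u) \<noteq> 0\<close> psd_quad[OF less.prems, of u] by (simp add: \<alpha>_def)
    define b where "b = c *v u"
    define c' where "c' = c - (1/\<alpha>) *\<^sub>R outer b b"
    have symc: "sym_mat c" using less.prems psd_sym by blast
    have c'x: "c' *v x = c *v x - ((b \<bullet> x)/\<alpha>) *\<^sub>R b" for x
      by (simp add: c'_def matrix_vector_mult_diff_rdistrib outer_mult scaleR_mat_vec)
    have bx: "b \<bullet> x = u \<bullet> (c *v x)" for x
      using sym_dot[OF symc, of u x] by (simp add: b_def inner_commute)
    have "psd c'"
      unfolding psd_def
    proof
      have "sym_mat (outer b b)" using psd_outer psd_sym by blast
      then show "sym_mat c'" unfolding c'_def by (intro sym_mat_diff symc sym_mat_scale)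
      show "\<forall>x. 0 \<le> x \<bullet> (c' *v x)"
      proof
        fix x
        have cs: "(u \<bullet> (c *v x))^2 \<le> \<alpha> * (x \<bullet> (c *v x))"
          using psd_cs[OF less.prems, of u x] by (simp add: \<alpha>_def)
        have "x \<bullet> (c' *v x) = x \<bullet> (c *v x) - (u \<bullet> (c *v x))^2 / \<alpha>"
          by (simp add: c'x bx inner_diff_right power2_eq_square inner_commute)
        also have "\<dots> \<ge> 0" using cs al by (simp add: divide_le_eq mult.commute)
        finally show "0 \<le> x \<bullet> (c' *v x)" .
      qed
    qed
    have sub: "range (\<lambda>x. c' *v x) \<subset> range (\<lambda>x. c *v x)"
    proof
      show "range (\<lambda>x. c' *v x) \<subseteq> range (\<lambda>x. c *v x)"
      proof clarify
        fix x
        have "c' *v x = c *v (x - ((b \<bullet> x)/\<alpha>) *\<^sub>R u)"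
          by (simp add: c'x matrix_vector_mult_diff_distrib matrix_vector_mult_scaleR b_def)
        then show "c' *v x \<in> range (\<lambda>x. c *v x)" by blast
      qed
      have "b \<notin> range (\<lambda>x. c' *v x)"
      proof
        assume "b \<in> range (\<lambda>x. c' *v x)"
        then obtain y where y: "b = c' *v y" by blast
        have "c' *v u = 0" using al by (simp add: c'x bx \<alpha>_def b_def inner_commute)
        have "sym_mat c'" using \<open>psd c'\<close> psd_sym by blast
        have "u \<bullet> b = y \<bullet> (c' *v u)" using sym_dot[OF \<open>sym_mat c'\<close>, of u y] y by simp
        then have "\<alpha> = 0" using \<open>c' *v u = 0\<close> by (simp add: \<alpha>_def b_def)
        then show False using al by simp
      qed
      moreover have "b \<in> range (\<lambda>x. c *v x)" by (simp add: b_def)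
      ultimately show "range (\<lambda>x. c' *v x) \<noteq> range (\<lambda>x. c *v x)" by blast
    qed
    have "subspace (range (\<lambda>x. c' *v x))" "subspace (range (\<lambda>x. c *v x))"
      unfolding subspace_def
      by (auto simp: matrix_vector_right_distrib[symmetric] matrix_vector_mult_scaleR[symmetric] simp del: matrix_vector_right_distrib matrix_vector_mult_scaleR)
         (metis matrix_vector_mult_0_right rangeI)+
    then have "dim (range (\<lambda>x. c' *v x)) < dim (range (\<lambda>x. c *v x))"
      using sub by (intro dim_psubset) (metis span_eq_iff)
    then have ih: "0 \<le> a \<bullet> c'" using less.hyps \<open>psd c'\<close> by blast
    have "a \<bullet> c = a \<bullet> c' + (1/\<alpha>) * (b \<bullet> (a *v b))"
      by (simp add: c'_def inner_diff_right inner_outer)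
    moreover have "0 \<le> (1/\<alpha>) * (b \<bullet> (a *v b))" using al psd_quad[OF assms(1)] by simp
    ultimately show ?thesis using ih by simp
  qed
qed

lemma norm_mat_vec: "norm (A *v x) \<le> norm (A::real^'n^'m) * norm x"
proof -
  have "(norm (A *v x))^2 = (\<Sum>i\<in>UNIV. (A$i \<bullet> x)^2)"
    by (simp only: power2_norm_eq_inner) (simp add: inner_vec_def matrix_vector_mult_def power2_eq_square)
  also have "\<dots> \<le> (\<Sum>i\<in>UNIV. (A$i \<bullet> A$i) * (x \<bullet> x))"
    by (rule sum_mono) (rule Cauchy_Schwarz_ineq)
  also have "\<dots> = (norm A * norm x)^2"
    by (simp add: power_mult_distrib power2_norm_eq_inner inner_vec_def[of A A] sum_distrib_right)
  finally show ?thesis by (rule power2_le_imp_le) simp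
qed

lemma quad_le_norm: "\<bar>x \<bullet> (A *v x)\<bar> \<le> norm (A::real^'n^'n) * (norm x)^2"
proof -
  have "\<bar>x \<bullet> (A *v x)\<bar> \<le> norm x * norm (A *v x)" by (rule Cauchy_Schwarz_ineq2)
  also have "\<dots> \<le> norm x * (norm A * norm x)" by (rule mult_left_mono[OF norm_mat_vec]) simp
  finally show ?thesis by (simp add: power2_eq_square algebra_simps)
qed

lemma entry_eq: "axis i 1 \<bullet> ((D::real^'n^'n) *v axis j 1) = D$i$j"
  by (simp add: inner_axis' matrix_vector_mult_basis column_def)

lemma mat_bound:
  fixes D :: "real^'n^'n"
  assumes "sym_mat D" "\<And>v. \<bar>v \<bullet> (D *v v)\<bar> \<le> M * (norm v)^2"
  shows "norm D \<le> 3 * M * real (CARD('n))^2"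
proof -
  have M: "0 \<le> M" using assms(2)[of "axis undefined 1"] by (simp add: norm_axis_1)
  have ent: "\<bar>D$i$j\<bar> \<le> 3 * M" for i j
  proof -
    define u where "u = axis i (1::real) + 1 *\<^sub>R axis j 1"
    have "u \<bullet> (D *v u) = D$i$i + 2 * D$j$i + D$j$j"
      using quad_expand[OF assms(1), of "axis i 1" 1 "axis j 1"] by (simp add: u_def entry_eq)
    moreover have "D$j$i = D$i$j"
    proof -
      have "transpose D $ j $ i = D $ j $ i" using assms(1) by (simp add: sym_mat_def)
      then show ?thesis by (simp add: transpose_def)
    qed
    moreover have "norm u \<le> 2" unfolding u_def
      using norm_triangle_ineq[of "axis i (1::real)" "axis j 1"] by (simp add: norm_axis_1)
    then have "(norm u)^2 \<le> 2^2" by (intro power_mono) auto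
    then have "\<bar>u \<bullet> (D *v u)\<bar> \<le> 4 * M"
    proof -
      have "M * (norm u)^2 \<le> M * 2^2" using M \<open>(norm u)^2 \<le> 2^2\<close> by (rule mult_left_mono[rotated])
      then show ?thesis using assms(2)[of u] by simp
    qed
    moreover have "\<bar>D$i$i\<bar> \<le> M" "\<bar>D$j$j\<bar> \<le> M"
      using assms(2)[of "axis i 1"] assms(2)[of "axis j 1"] by (simp_all add: entry_eq norm_axis_1)
    ultimately show ?thesis by linarith
  qed
  have "norm D \<le> (\<Sum>i\<in>UNIV. norm (D$i))" unfolding norm_vec_def by (rule L2_set_le_sum) simp
  also have "\<dots> \<le> (\<Sum>i\<in>UNIV. \<Sum>j\<in>UNIV. \<bar>D$i$j\<bar>)"
    by (rule sum_mono) (rule norm_le_l1_cart)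
  also have "\<dots> \<le> (\<Sum>i\<in>(UNIV::'n set). \<Sum>j\<in>(UNIV::'n set). 3 * M)"
    by (intro sum_mono ent)
  also have "\<dots> = 3 * M * real (CARD('n))^2" by (simp add: power2_eq_square)
  finally show ?thesis .
qed

lemma proj_exists:
  fixes S :: "'a::euclidean_space set"
  assumes S: "subspace S"
  shows "\<exists>p. linear p \<and> (\<forall>x. p x \<in> S) \<and> (\<forall>x. \<forall>w\<in>S. (x - p x) \<bullet> w = 0)"
proof -
  have ex: "\<exists>y. y \<in> S \<and> (\<forall>w\<in>S. (x - y) \<bullet> w = 0)" for x
  proof -
    obtain y z where "y \<in> span S" "\<And>w. w \<in> span S \<Longrightarrow> orthogonal z w" "x = y + z"
      using orthogonal_subspace_decomp_exists[of S x] by blast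
    moreover have "span S = S" using S by (simp add: span_eq_iff)
    ultimately show ?thesis by (intro exI[of _ y]) (auto simp: orthogonal_def)
  qed
  have uniq: "y1 = y2" if "y1 \<in> S" "\<forall>w\<in>S. (x - y1) \<bullet> w = 0" "y2 \<in> S" "\<forall>w\<in>S. (x - y2) \<bullet> w = 0" for x y1 y2
  proof -
    have d: "y1 - y2 \<in> S" using S that by (simp add: subspace_diff)
    have "(x - y2) \<bullet> (y1 - y2) - (x - y1) \<bullet> (y1 - y2) = 0" using that d by simp
    then have "(y1 - y2) \<bullet> (y1 - y2) = 0" by (simp add: inner_diff_left inner_diff_right inner_commute)
    then show ?thesis by simp
  qed
  define p where "p x = (SOME y. y \<in> S \<and> (\<forall>w\<in>S. (x - y) \<bullet> w = 0))" for x
  have pS: "p x \<in> S" and po: "\<forall>w\<in>S. (x - p x) \<bullet> w = 0" for x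
    using someI_ex[OF ex[of x]] by (auto simp: p_def)
  have "linear p"
  proof (rule linearI)
    fix x y
    show "p (x + y) = p x + p y"
    proof (rule uniq[OF pS po])
      show "p x + p y \<in> S" using S pS by (simp add: subspace_add)
      show "\<forall>w\<in>S. (x + y - (p x + p y)) \<bullet> w = 0"
        using po[of x] po[of y] by (simp add: algebra_simps inner_diff_left inner_add_left)
    qed
  next
    fix c :: real and x
    show "p (c *\<^sub>R x) = c *\<^sub>R p x"
    proof (rule uniq[OF pS po])
      show "c *\<^sub>R p x \<in> S" using S pS by (simp add: subspace_scale)
      show "\<forall>w\<in>S. (c *\<^sub>R x - c *\<^sub>R p x) \<bullet> w = 0"
        using po[of x] by (simp add: scaleR_diff_right[symmetric])
    qed
  qed
  then show ?thesis using pS po by blast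
qed

lemma min_eig:
  fixes z :: "real^'n^'n"
  assumes z: "psd z" "z \<noteq> 0"
  shows "0 < min_pos_eig z \<and> (\<forall>p. (\<forall>k. z *v k = 0 \<longrightarrow> p \<bullet> k = 0) \<longrightarrow> min_pos_eig z * (norm p)^2 \<le> p \<bullet> (z *v p))"
proof -
  have symz: "sym_mat z" using z psd_sym by blast
  define V where "V = {x. \<forall>k\<in>{k. z *v k = 0}. orthogonal k x}"
  have subV: "subspace V" unfolding V_def by (rule subspace_orthogonal_to_vectors)
  have inV: "x \<in> V \<longleftrightarrow> (\<forall>k. z *v k = 0 \<longrightarrow> x \<bullet> k = 0)" for x
    by (auto simp: V_def orthogonal_def inner_commute)
  have zV: "z *v y \<in> V" for y
    unfolding inV using sym_dot[OF symz] by (metis inner_zero_right inner_commute)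
  define f where "f x = x \<bullet> (z *v x)" for x
  define Sph where "Sph = V \<inter> sphere 0 1"
  obtain y where "z *v y \<noteq> 0" using z(2) by (metis matrix_eq matrix_vector_mult_0)
  then have "(1 / norm (z *v y)) *\<^sub>R (z *v y) \<in> Sph"
    using zV subV by (simp add: Sph_def subspace_scale norm_scaleR)
  then have Sne: "Sph \<noteq> {}" by blast
  have "closed V" using subV by (rule closed_subspace)
  then have Scomp: "compact Sph" unfolding Sph_def by (intro closed_Int_compact) auto
  have fcont: "continuous_on Sph f" unfolding f_def
    by (intro continuous_intros continuous_on_compose2[OF matrix_vector_mult_linear_continuous_on]) auto
  obtain x0 where x0: "x0 \<in> Sph" "\<And>y. y \<in> Sph \<Longrightarrow> f x0 \<le> f y"
    using continuous_attains_inf[OF Scomp Sne fcont] by blast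
  define lam where "lam = f x0"
  have x0V: "x0 \<in> V" and nx0: "norm x0 = 1" using x0(1) by (auto simp: Sph_def)
  have fscale: "f (c *\<^sub>R x) = c^2 * f x" for c x
    by (simp add: f_def matrix_vector_mult_scaleR power2_eq_square)
  have lamV: "lam * (norm y)^2 \<le> f y" if "y \<in> V" for y
  proof (cases "y = 0")
    case True then show ?thesis by (simp add: f_def)
  next
    case False
    have "(1 / norm y) *\<^sub>R y \<in> Sph" using that False subV by (simp add: Sph_def subspace_scale norm_scaleR)
    then have "lam \<le> f ((1 / norm y) *\<^sub>R y)" using x0(2) by (simp add: lam_def)
    also have "\<dots> = f y / (norm y)^2" by (simp add: fscale power_divide)
    finally show ?thesis using False by (simp add: le_divide_eq)
  qed
  have orth: "y \<bullet> (z *v x0 - lam *\<^sub>R x0) = 0" if "y \<in> V" for y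
  proof -
    have "y \<bullet> (z *v x0) - lam * (y \<bullet> x0) = 0"
    proof (rule quad_lemma)
      fix t
      have "x0 + t *\<^sub>R y \<in> V" using subV x0V that by (simp add: subspace_add subspace_scale)
      from lamV[OF this] have "0 \<le> f (x0 + t *\<^sub>R y) - lam * (norm (x0 + t *\<^sub>R y))^2" by simp
      also have "f (x0 + t *\<^sub>R y) = f x0 + 2 * t * (y \<bullet> (z *v x0)) + t^2 * f y"
        unfolding f_def by (rule quad_expand[OF symz])
      also have "(norm (x0 + t *\<^sub>R y))^2 = 1 + 2 * t * (y \<bullet> x0) + t^2 * (norm y)^2"
      proof -
        have x1: "x0 \<bullet> x0 = 1" using nx0 by (metis power2_norm_eq_inner one_power2)
        show ?thesis
          by (simp only: power2_norm_eq_inner) (simp add: x1 inner_add_left inner_add_right inner_commute power2_eq_square algebra_simps)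
      qed
      finally show "0 \<le> 2 * t * (y \<bullet> (z *v x0) - lam * (y \<bullet> x0)) + t^2 * (f y - lam * (norm y)^2)"
        by (simp add: lam_def algebra_simps)
    qed (use lamV[OF that] in simp)
    then show ?thesis by (simp add: inner_diff_right)
  qed
  have "z *v x0 - lam *\<^sub>R x0 \<in> V" using zV x0V subV by (simp add: subspace_diff subspace_scale)
  from orth[OF this] have eig: "z *v x0 = lam *\<^sub>R x0" by simp
  have lampos: "0 < lam"
  proof -
    have "0 \<le> lam" using psd_quad[OF z(1)] by (simp add: lam_def f_def)
    moreover have "lam \<noteq> 0"
    proof
      assume "lam = 0"
      then have "z *v x0 = 0" using eig by simp
      then have "x0 \<bullet> x0 = 0" using x0V inV by blast
      then show False using nx0 by simp
    qed
    ultimately show ?thesis by simp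
  qed
  define E where "E = {l. 0 < l \<and> is_eigenvalue z l}"
  have lamE: "lam \<in> E" unfolding E_def is_eigenvalue_def using lampos eig nx0 by (intro CollectI conjI exI[of _ x0]) auto
  have "min_pos_eig z = lam"
    unfolding min_pos_eig_def E_def[symmetric]
  proof (rule antisym)
    show "Inf E \<le> lam" using lamE by (intro cInf_lower) (auto simp: E_def bdd_below_def intro!: exI[of _ 0])
    show "lam \<le> Inf E"
    proof (rule cInf_greatest)
      show "E \<noteq> {}" using lamE by blast
      fix l assume "l \<in> E"
      then obtain x where l: "0 < l" "x \<noteq> 0" "z *v x = l *\<^sub>R x" by (auto simp: E_def is_eigenvalue_def)
      have "x = (1/l) *\<^sub>R (z *v x)" using l by simp
      then have "x \<in> V" using zV subV by (metis subspace_scale)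
      from lamV[OF this] have "lam * (norm x)^2 \<le> l * (norm x)^2"
        using l by (simp add: f_def power2_norm_eq_inner)
      then show "lam \<le> l" using l by simp
    qed
  qed
  then show ?thesis using lampos lamV inV by (auto simp: f_def)
qed

lemma matrix_add_rdistrib': "((A::real^'n^'m) + B) ** C = A ** C + B ** C"
  by (simp add: matrix_matrix_mult_def vec_eq_iff sum.distrib algebra_simps)

definition cong :: "real^'n^'n \<Rightarrow> real^'n^'n \<Rightarrow> real^'n^'n" where
  "cong P X = transpose P ** X ** P"

lemma cong_add: "cong P (X + Y) = cong P X + cong P Y"
  by (simp add: cong_def matrix_add_ldistrib matrix_add_rdistrib')

lemma cong_scale: "cong P (k *\<^sub>R X) = k *\<^sub>R cong P X"
  by (simp add: cong_def matrix_scalar_ac scalar_matrix_assoc)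

lemma cong_quad: "x \<bullet> (cong P X *v y) = (P *v x) \<bullet> (X *v (P *v y))"
proof -
  have "cong P X *v y = transpose P *v (X *v (P *v y))"
    by (simp add: cong_def matrix_vector_mul_assoc matrix_mul_assoc)
  moreover have "x \<bullet> (transpose P *v u) = u \<bullet> (P *v x)" for u
    by (metis dot_lmul_matrix inner_commute transpose_matrix_vector)
  ultimately show ?thesis by (metis inner_commute)
qed

lemma cong_sym: "sym_mat X \<Longrightarrow> sym_mat (cong P X)"
  by (simp add: sym_mat_def cong_def matrix_transpose_mul matrix_mul_assoc)

lemma psd_cong: "psd X \<Longrightarrow> psd (cong P X)"
  unfolding psd_def using cong_sym[of X P] by (simp add: cong_quad)

lemma psd_add: "psd a \<Longrightarrow> psd b \<Longrightarrow> psd (a + b)"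
  by (simp add: psd_def sym_mat_add matrix_vector_mult_add_rdistrib inner_add_right add_nonneg_nonneg)

lemma psd_scale: "psd a \<Longrightarrow> 0 \<le> k \<Longrightarrow> psd (k *\<^sub>R a)"
  by (simp add: psd_def sym_mat_scale scaleR_mat_vec)

lemma psd_zero: "psd (0::real^'n^'n)"
  by (simp add: psd_def sym_mat_def transpose_def vec_eq_iff)

lemma psd_mat1: "psd (mat 1 :: real^'n^'n)"
  by (simp add: psd_def sym_mat_def)

lemma psd_ge_quad: "psd_ge a b \<Longrightarrow> v \<bullet> (b *v v) \<le> v \<bullet> (a *v v)"
  unfolding psd_ge_def using psd_outer[of v] by (auto simp: frob_inner_eq inner_outer)

lemma psd_ge_imp: "psd_ge a b \<Longrightarrow> sym_mat a \<Longrightarrow> sym_mat b \<Longrightarrow> psd (a - b)"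
  unfolding psd_def using psd_ge_quad[of a b] by (auto simp: sym_mat_diff matrix_vector_mult_diff_rdistrib inner_diff_right)

lemma imp_psd_ge: "psd (a - b) \<Longrightarrow> psd_ge a b"
  unfolding psd_ge_def using psd_dual[of "a - b"] by (auto simp: frob_inner_eq inner_diff_left)

lemma quad_le_of_psd_diff: "psd (a - b) \<Longrightarrow> v \<bullet> (b *v v) \<le> v \<bullet> (a *v v)"
  using psd_quad[of "a - b" v] by (simp add: matrix_vector_mult_diff_rdistrib inner_diff_right)

lemma trace_pos:
  fixes z :: "real^'n^'n"
  assumes "psd z" "z \<noteq> 0"
  shows "0 < z \<bullet> mat 1"
proof -
  have tr: "z \<bullet> mat 1 = (\<Sum>i\<in>UNIV. axis i 1 \<bullet> (z *v axis i 1))"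
  proof -
    have "z \<bullet> mat 1 = (\<Sum>i\<in>UNIV. z$i$i)"
      unfolding inner_vec_def mat_def by (simp add: if_distrib sum.delta cong: if_cong)
    then show ?thesis by (simp add: entry_eq)
  qed
  have nn: "0 \<le> axis i 1 \<bullet> (z *v axis i 1)" for i using psd_quad[OF assms(1)] .
  show ?thesis
  proof (rule ccontr)
    assume "\<not> 0 < z \<bullet> mat 1"
    moreover have "0 \<le> (\<Sum>i\<in>UNIV. axis i 1 \<bullet> (z *v axis i 1))" by (rule sum_nonneg) (use nn in auto)
    ultimately have "(\<Sum>i\<in>UNIV. axis i 1 \<bullet> (z *v axis i 1)) = 0" using tr by linarith
    then have "\<forall>i\<in>UNIV. axis i 1 \<bullet> (z *v axis i 1) = 0" using nn by (subst (asm) sum_nonneg_eq_0_iff) auto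
    then have "\<forall>i. z *v axis i 1 = 0" using quad_zero[OF assms(1)] by blast
    then have "z = 0" by (simp add: matrix_vector_mult_basis column_def vec_eq_iff)
    then show False using assms(2) by simp
  qed
qed

lemma paths_D:
  assumes "\<pi> \<in> paths"
  shows "\<And>s. s \<in> {0..1} \<Longrightarrow> psd (\<pi> s)"
    and "\<And>s s'. 0 \<le> s \<Longrightarrow> s \<le> s' \<Longrightarrow> s' \<le> 1 \<Longrightarrow> psd (\<pi> s' - \<pi> s)"
    and "\<And>s. s \<in> {0<..1} \<Longrightarrow> (\<pi> \<longlongrightarrow> \<pi> s) (at s within {0..<s})"
proof -
  show p: "\<And>s. s \<in> {0..1} \<Longrightarrow> psd (\<pi> s)" using assms by (auto simp: paths_def)
  show "\<And>s. s \<in> {0<..1} \<Longrightarrow> (\<pi> \<longlongrightarrow> \<pi> s) (at s within {0..<s})" using assms by (auto simp: paths_def)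
  fix s s' :: real assume "0 \<le> s" "s \<le> s'" "s' \<le> 1"
  then have "psd_ge (\<pi> s') (\<pi> s)" using assms by (auto simp: paths_def)
  moreover have "psd (\<pi> s)" "psd (\<pi> s')" using p \<open>0 \<le> s\<close> \<open>s \<le> s'\<close> \<open>s' \<le> 1\<close> by auto
  ultimately show "psd (\<pi> s' - \<pi> s)" using psd_ge_imp psd_sym by blast
qed

lemma path_image:
  assumes "\<pi> \<in> paths" "linear F" "\<And>Y. psd Y \<Longrightarrow> psd (F Y)"
  shows "(\<lambda>s. F (\<pi> s)) \<in> paths"
proof -
  have cont: "isCont F X" for X
    using assms(2) by (intro linear_continuous_at) (simp add: linear_conv_bounded_linear)
  show ?thesis
    unfolding paths_def
  proof (intro CollectI conjI ballI allI impI)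
    fix s :: real assume "s \<in> {0..1}"
    then show "psd (F (\<pi> s))" using paths_D(1)[OF assms(1)] assms(3) by blast
  next
    fix s :: real assume "s \<in> {0<..1}"
    then show "((\<lambda>s. F (\<pi> s)) \<longlongrightarrow> F (\<pi> s)) (at s within {0..<s})"
      using paths_D(3)[OF assms(1)] by (intro isCont_tendsto_compose[OF cont]) auto
  next
    fix s s' :: real assume "0 \<le> s \<and> s \<le> s' \<and> s' \<le> 1"
    then have "psd (\<pi> s' - \<pi> s)" using paths_D(2)[OF assms(1)] by blast
    then have "psd (F (\<pi> s' - \<pi> s))" by (rule assms(3))
    then have "psd (F (\<pi> s') - F (\<pi> s))" using assms(2) by (simp add: linear_diff)
    then show "psd_ge (F (\<pi> s')) (F (\<pi> s))" by (rule imp_psd_ge)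
  qed
qed

lemma path_integrable:
  assumes "\<pi> \<in> paths"
  shows "\<pi> integrable_on {0..1}"
proof -
  have qm: "(\<lambda>s. v \<bullet> (\<pi> s *v v)) integrable_on {0..1}" for v
  proof (rule integrable_on_mono_on, rule mono_onI)
    fix r s :: real assume "r \<in> {0..1}" "s \<in> {0..1}" "r \<le> s"
    then have "psd (\<pi> s - \<pi> r)" using paths_D(2)[OF assms] by auto
    then show "v \<bullet> (\<pi> r *v v) \<le> v \<bullet> (\<pi> s *v v)" by (rule quad_le_of_psd_diff)
  qed
  have ent: "(\<lambda>s. \<pi> s $ i $ j) integrable_on {0..1}" for i j
  proof -
    define u where "u = axis i (1::real) + 1 *\<^sub>R axis j 1"
    have "(\<lambda>s. (1/2) * ((u \<bullet> (\<pi> s *v u) - axis i 1 \<bullet> (\<pi> s *v axis i 1)) - axis j 1 \<bullet> (\<pi> s *v axis j 1))) integrable_on {0..1}"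
      using integrable_on_cmult_left[where c="1/2", OF Henstock_Kurzweil_Integration.integrable_diff[OF Henstock_Kurzweil_Integration.integrable_diff[OF qm qm] qm]] by simp
    moreover have "(1/2) * ((u \<bullet> (\<pi> s *v u) - axis i 1 \<bullet> (\<pi> s *v axis i 1)) - axis j 1 \<bullet> (\<pi> s *v axis j 1)) = \<pi> s $ i $ j"
      if "s \<in> {0..1}" for s
    proof -
      have sy: "sym_mat (\<pi> s)" using paths_D(1)[OF assms that] psd_sym by blast
      have "\<pi> s $ j $ i = \<pi> s $ i $ j"
      proof -
        have "transpose (\<pi> s) $ j $ i = \<pi> s $ j $ i" using sy by (simp add: sym_mat_def)
        then show ?thesis by (simp add: transpose_def)
      qed
      then show ?thesis
        using quad_expand[OF sy, of "axis i 1" 1 "axis j 1"] by (simp add: u_def entry_eq)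
    qed
    ultimately show ?thesis by (rule integrable_eq)
  qed
  show ?thesis
  proof (rule integrable_componentwise)
    fix b :: "real^'a^'a" assume "b \<in> Basis"
    then obtain i j where b: "b = axis i (axis j 1)" by (auto simp: Basis_vec_def)
    show "(\<lambda>s. \<pi> s \<bullet> b) integrable_on {0..1}" using ent[of i j] by (simp add: b inner_axis)
  qed
qed

lemma path_norm_integral:
  assumes "\<pi> \<in> paths" "linear G" "\<And>s. s \<in> {0..1} \<Longrightarrow> norm (G (\<pi> s)) \<le> B"
  shows "(\<lambda>s. norm (G (\<pi> s))) integrable_on {0..1} \<and> integral {0..1} (\<lambda>s. norm (G (\<pi> s))) \<le> B"
proof -
  have pm: "\<pi> \<in> borel_measurable (lebesgue_on {0..1})"
    by (rule integrable_imp_measurable[OF path_integrable[OF assms(1)]])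
  have "continuous_on UNIV (\<lambda>X. norm (G X))"
    using assms(2) by (intro continuous_on_norm linear_continuous_on) (simp add: linear_conv_bounded_linear)
  then have hm: "(\<lambda>s. norm (G (\<pi> s))) \<in> borel_measurable (lebesgue_on {0..1})"
    using pm by (rule borel_measurable_continuous_on)
  have int: "(\<lambda>s. norm (G (\<pi> s))) integrable_on {0..1}"
    by (rule measurable_bounded_by_integrable_imp_integrable_real[OF hm, of "\<lambda>_. B"]) (use assms(3) in auto)
  have "integral {0..1} (\<lambda>s. norm (G (\<pi> s))) \<le> B"
    using Henstock_Kurzweil_Integration.integral_le[OF int integrable_const_ivl, of B] assms(3) by auto
  then show ?thesis using int by simp
qed

lemma real_bound:
  fixes pXp qXq pXq th Rv e \<rho> Z r S V :: real
  assumes "0 \<le> pXp" "pXp \<le> (Z + r) * V" "0 \<le> qXq" "qXq \<le> r * V" "\<bar>pXq\<bar> \<le> S * V"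
    "0 \<le> th" "th \<le> 1" "\<bar>Rv\<bar> \<le> e * Z * V + r * V" "0 \<le> e" "e \<le> \<rho>" "r \<le> S"
    "0 \<le> r" "0 \<le> Z" "0 \<le> V"
  shows "\<bar>e * pXp + 2 * pXq + qXq - th * Rv\<bar> \<le> 4 * (\<rho> * (Z + r) + S) * V"
proof -
  have a1: "e * pXp \<le> \<rho> * ((Z + r) * V)"
    using assms by (intro mult_mono) auto
  have a2: "0 \<le> e * pXp" using assms by simp
  have a3: "\<bar>th * Rv\<bar> \<le> \<bar>Rv\<bar>"
    using assms by (simp add: abs_mult mult_left_le_one_le)
  have a4: "e * Z * V \<le> \<rho> * ((Z + r) * V)"
  proof -
    have "e * Z * V = e * (Z * V)" by simp
    also have "\<dots> \<le> \<rho> * ((Z + r) * V)" using assms by (intro mult_mono mult_right_mono) auto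
    finally show ?thesis .
  qed
  have a5: "r * V \<le> S * V" using assms by (intro mult_right_mono) auto
  have eq: "4 * (\<rho> * (Z + r) + S) * V = 4 * (\<rho> * ((Z + r) * V)) + 4 * (S * V)" by (simp add: algebra_simps)
  have b1: "- \<bar>Rv\<bar> \<le> th * Rv" "th * Rv \<le> \<bar>Rv\<bar>" using a3 by linarith+
  have b2: "- (S * V) \<le> pXq" "pXq \<le> S * V" using assms(5) by linarith+
  have b3: "\<bar>Rv\<bar> \<le> \<rho> * ((Z + r) * V) + S * V" using assms(8) a4 a5 by linarith
  show ?thesis unfolding eq abs_le_iff
    using a1 a2 b1 b2 b3 a5 assms(3,4) by linarith
qed

lemma one_minus_t2:
  fixes m r :: real
  assumes "0 < m" "0 \<le> r"
  shows "r / (m + r) \<le> sqrt r / sqrt m"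
proof (cases "r \<le> m")
  case True
  have "r / (m + r) \<le> r / m" using assms by (intro divide_left_mono) auto
  also have "r / m \<le> sqrt (r / m)"
  proof -
    have "r / m \<le> 1" using True assms by simp
    moreover have "0 \<le> r/m" using assms by simp
    ultimately have "(r/m) * (r/m) \<le> 1 * (r/m)" by (intro mult_right_mono)
    then have "(r/m)^2 \<le> r/m" by (simp add: power2_eq_square)
    then have "sqrt ((r/m)^2) \<le> sqrt (r/m)" by (rule real_sqrt_le_mono)
    then show ?thesis using assms by simp
  qed
  finally show ?thesis by (simp add: real_sqrt_divide)
next
  case False
  have "r / (m + r) \<le> 1" using assms by simp
  also have "1 \<le> sqrt (r / m)" using False assms by simp
  finally show ?thesis by (simp add: real_sqrt_divide)
qed

lemma Kfun_ge:
  fixes z :: "real^'n^'n"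
  assumes "z \<noteq> 0" "0 < min_pos_eig z" "0 \<le> r"
  shows "sqrt r / sqrt (min_pos_eig z) * (norm z + r) + sqrt ((norm z + r) * r) \<le> Kfun z r"
proof -
  define m where "m = min_pos_eig z"
  define A where "A = (norm z + r) * sqrt r / sqrt m"
  have A: "0 \<le> A" using assms by (simp add: A_def m_def)
  have "0 \<le> sqrt (norm z) / sqrt m" using assms(2) by (simp add: m_def)
  then have "A * 1 \<le> A * (1 + sqrt (norm z) / sqrt m)" using A by (intro mult_left_mono) auto
  then have "A \<le> A * (1 + sqrt (norm z) / sqrt m)" by simp
  also have "\<dots> = (norm z + r) * (1 + sqrt (norm z) / sqrt m) * sqrt r / sqrt m" by (simp add: A_def)
  finally show ?thesis using assms(1) by (simp add: Kfun_def frob_norm_eq m_def A_def mult.commute)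
qed

lemma main_nz:
  fixes w z :: "real^'n^'n"
  assumes w: "psd w" and z: "psd z" "z \<noteq> 0" and pi: "\<pi> \<in> paths_to (z + w)"
  shows "\<exists>\<pi>'\<in>paths_to z. (\<lambda>s. norm (\<pi> s - \<pi>' s)) integrable_on {0..1} \<and>
           integral {0..1} (\<lambda>s. norm (\<pi> s - \<pi>' s)) \<le> 12 * real CARD('n)^2 * Kfun z (norm w)"
proof -
  have pip: "\<pi> \<in> paths" and pi1: "\<pi> 1 = z + w" using pi by (auto simp: paths_to_def)
  define m where "m = min_pos_eig z"
  define r where "r = norm w"
  have r0: "0 \<le> r" by (simp add: r_def)
  have m0: "0 < m" and mV: "\<And>p. (\<forall>k. z *v k = 0 \<longrightarrow> p \<bullet> k = 0) \<Longrightarrow> m * (norm p)^2 \<le> p \<bullet> (z *v p)"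
    using min_eig[OF z] by (auto simp: m_def)
  have symz: "sym_mat z" and symw: "sym_mat w" using z w psd_sym by blast+
  have subK: "subspace {x. z *v x = 0}"
    by (auto simp: subspace_def matrix_vector_right_distrib matrix_vector_mult_scaleR)
  obtain pk where pkl: "linear pk" and pkK: "\<And>x. z *v pk x = 0"
    and pko: "\<And>x k. z *v k = 0 \<Longrightarrow> (x - pk x) \<bullet> k = 0"
    using proj_exists[OF subK] by auto
  define pp where "pp x = x - pk x" for x
  have ppl: "linear pp" unfolding pp_def
    by (intro linearI) (simp_all add: linear_add[OF pkl] linear_scale[OF pkl] scaleR_diff_right)
  define P where "P = matrix pp"
  have Pv: "P *v x = pp x" for x unfolding P_def using ppl by (intro matrix_works) (simp add: linear_matrix_vector_mul_eq)
  have pV: "\<forall>k. z *v k = 0 \<longrightarrow> pp v \<bullet> k = 0" for v using pko by (simp add: pp_def)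
  have vpq: "v = pp v + 1 *\<^sub>R pk v" for v by (simp add: pp_def)
  have pq0: "pp v \<bullet> pk v = 0" for v using pV pkK by blast
  have nv: "(norm v)^2 = (norm (pp v))^2 + (norm (pk v))^2" for v
  proof -
    have "(norm v)^2 = (pp v + pk v) \<bullet> (pp v + pk v)" by (simp add: pp_def power2_norm_eq_inner)
    also have "\<dots> = (norm (pp v))^2 + (norm (pk v))^2"
      using pq0[of v] by (simp add: inner_add_left inner_add_right inner_commute power2_norm_eq_inner)
    finally show ?thesis .
  qed
  have np: "(norm (pp v))^2 \<le> (norm v)^2" and nq: "(norm (pk v))^2 \<le> (norm v)^2" for v
    using nv[of v] by auto
  have qz: "v \<bullet> (z *v v) = pp v \<bullet> (z *v pp v)" for v
  proof -
    have zv: "z *v v = z *v pp v" using pkK by (simp add: pp_def matrix_vector_mult_diff_distrib)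
    have "pk v \<bullet> (z *v pp v) = pp v \<bullet> (z *v pk v)" by (rule sym_dot[OF symz])
    then have "pk v \<bullet> (z *v pp v) = 0" using pkK by simp
    then show ?thesis using zv by (simp add: pp_def inner_diff_left)
  qed
  define t2 where "t2 = m / (m + r)"
  have t20: "0 \<le> t2" "t2 \<le> 1" using m0 r0 by (auto simp: t2_def)
  have t2e: "1 - t2 = r / (m + r)" using m0 r0 by (simp add: t2_def field_simps)
  have t2m: "(1 - t2) * m = t2 * r" using m0 r0 by (simp add: t2e t2_def field_simps)
  define T where "T = (z + w) \<bullet> mat 1"
  have T0: "0 < T"
  proof -
    have "0 < z \<bullet> mat 1" by (rule trace_pos[OF z])
    moreover have "0 \<le> w \<bullet> mat 1" by (rule psd_dual[OF w psd_mat1])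
    ultimately show ?thesis by (simp add: T_def inner_add_left)
  qed
  define Rm where "Rm = z - t2 *\<^sub>R cong P (z + w)"
  define th where "th X = (X \<bullet> mat 1) / T" for X :: "real^'n^'n"
  define F where "F X = t2 *\<^sub>R cong P X + th X *\<^sub>R Rm" for X :: "real^'n^'n"
  have symRm: "sym_mat Rm" unfolding Rm_def
    by (intro sym_mat_diff symz sym_mat_scale cong_sym sym_mat_add symw)
  have qR: "v \<bullet> (Rm *v v) = (1 - t2) * (pp v \<bullet> (z *v pp v)) - t2 * (pp v \<bullet> (w *v pp v))" for v
  proof -
    have "Rm *v v = z *v v - t2 *\<^sub>R (cong P (z + w) *v v)"
      by (simp add: Rm_def matrix_vector_mult_diff_rdistrib scaleR_mat_vec)
    then have e1: "v \<bullet> (Rm *v v) = v \<bullet> (z *v v) - t2 * (v \<bullet> (cong P (z + w) *v v))"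
      by (simp add: inner_diff_right)
    have e2: "v \<bullet> (cong P (z + w) *v v) = pp v \<bullet> (z *v pp v) + pp v \<bullet> (w *v pp v)"
      by (simp add: cong_quad Pv matrix_vector_mult_add_rdistrib inner_add_right)
    define a where "a = pp v \<bullet> (z *v pp v)"
    define b where "b = pp v \<bullet> (w *v pp v)"
    have "v \<bullet> (Rm *v v) = a - t2 * (a + b)" using e1 e2 qz[of v] by (simp add: a_def b_def)
    also have "\<dots> = (1 - t2) * a - t2 * b" by (simp add: algebra_simps)
    finally show ?thesis by (simp add: a_def b_def)
  qed
  have pz_le: "pp v \<bullet> (z *v pp v) \<le> norm z * (norm v)^2" for v
  proof -
    have "pp v \<bullet> (z *v pp v) \<le> norm z * (norm (pp v))^2"
      using quad_le_norm[of "pp v" z] by (rule order_trans[OF abs_ge_self])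
    also have "\<dots> \<le> norm z * (norm v)^2" by (rule mult_left_mono[OF np]) simp
    finally show ?thesis .
  qed
  have pw_le0: "pp v \<bullet> (w *v pp v) \<le> r * (norm (pp v))^2" for v
    using quad_le_norm[of "pp v" w] unfolding r_def by (rule order_trans[OF abs_ge_self])
  have Rm_nn: "0 \<le> v \<bullet> (Rm *v v)" for v
  proof -
    have "t2 * (pp v \<bullet> (w *v pp v)) \<le> t2 * (r * (norm (pp v))^2)"
      using pw_le0 t20 by (intro mult_left_mono) auto
    also have "\<dots> = ((1 - t2) * m) * (norm (pp v))^2" by (simp only: t2m mult.assoc)
    also have "\<dots> = (1 - t2) * (m * (norm (pp v))^2)" by (simp only: mult.assoc)
    also have "\<dots> \<le> (1 - t2) * (pp v \<bullet> (z *v pp v))" using mV[OF pV] t20 by (intro mult_left_mono) auto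
    finally show ?thesis by (simp add: qR)
  qed
  have psdRm: "psd Rm" using symRm Rm_nn by (simp add: psd_def)
  have Rm_abs: "\<bar>v \<bullet> (Rm *v v)\<bar> \<le> (1 - t2) * norm z * (norm v)^2 + r * (norm v)^2" for v
  proof -
    have h1: "(1 - t2) * (pp v \<bullet> (z *v pp v)) \<le> (1 - t2) * (norm z * (norm v)^2)"
      using pz_le t20 by (intro mult_left_mono) auto
    have h2: "0 \<le> t2 * (pp v \<bullet> (w *v pp v))" using t20 psd_quad[OF w] by simp
    have h3: "0 \<le> r * (norm v)^2" using r0 by simp
    have "v \<bullet> (Rm *v v) \<le> (1 - t2) * (norm z * (norm v)^2)" using h1 h2 qR[of v] by linarith
    then show ?thesis using Rm_nn[of v] h3 by (simp add: mult.assoc)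
  qed
  have th_nn: "0 \<le> th Y" if "psd Y" for Y using psd_dual[OF that psd_mat1] T0 by (simp add: th_def)
  have psdF: "psd (F Y)" if "psd Y" for Y
    unfolding F_def using that t20 th_nn psdRm by (intro psd_add psd_scale psd_cong) auto
  have linF: "linear F"
    by (intro linearI) (simp_all add: F_def th_def cong_add cong_scale inner_add_left add_divide_distrib scaleR_add_left algebra_simps)
  have F1: "F (z + w) = z" using T0 by (simp add: F_def th_def T_def[symmetric] Rm_def)
  define \<pi>' where "\<pi>' s = F (\<pi> s)" for s
  have pi'p: "\<pi>' \<in> paths_to z"
    using path_image[OF pip linF psdF] pi1 F1 by (simp add: paths_to_def \<pi>'_def[abs_def])
  define G where "G X = X - F X" for X :: "real^'n^'n"
  have linG: "linear G" unfolding G_def by (intro linearI) (simp_all add: linear_add[OF linF] linear_scale[OF linF] scaleR_diff_right)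
  define K where "K = Kfun z r"
  have Kge: "sqrt r / sqrt m * (norm z + r) + sqrt ((norm z + r) * r) \<le> K"
    using Kfun_ge[OF z(2) _ r0] m0 by (simp add: K_def m_def)
  have bound: "norm (G (\<pi> s)) \<le> 12 * real CARD('n)^2 * K" if s: "s \<in> {0..1}" for s
  proof -
    define X where "X = \<pi> s"
    have psdX: "psd X" using paths_D(1)[OF pip s] by (simp add: X_def)
    have psdX': "psd (z + w - X)" using paths_D(2)[OF pip, of s 1] s pi1 by (simp add: X_def)
    have symX: "sym_mat X" using psdX psd_sym by blast
    have thX: "0 \<le> th X" "th X \<le> 1"
    proof -
      show "0 \<le> th X" by (rule th_nn[OF psdX])
      have "0 \<le> (z + w - X) \<bullet> mat 1" by (rule psd_dual[OF psdX' psd_mat1])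
      then show "th X \<le> 1" using T0 by (simp add: th_def T_def inner_diff_left)
    qed
    have symG: "sym_mat (G X)" unfolding G_def F_def
      by (intro sym_mat_diff symX sym_mat_add sym_mat_scale cong_sym symRm)
    have "\<bar>v \<bullet> (G X *v v)\<bar> \<le> (4 * K) * (norm v)^2" for v
    proof -
      define p where "p = pp v"
      define q where "q = pk v"
      define S where "S = sqrt ((norm z + r) * r)"
      have zq: "z *v q = 0" by (simp add: q_def pkK)
      have nz: "norm (z + w) \<le> norm z + r" by (simp add: r_def norm_triangle_ineq)
      have pXp: "0 \<le> p \<bullet> (X *v p)" "p \<bullet> (X *v p) \<le> (norm z + r) * (norm v)^2"
      proof -
        show "0 \<le> p \<bullet> (X *v p)" by (rule psd_quad[OF psdX])
        have "p \<bullet> (X *v p) \<le> p \<bullet> ((z + w) *v p)" by (rule quad_le_of_psd_diff[OF psdX'])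
        also have "\<dots> \<le> norm (z + w) * (norm p)^2" using quad_le_norm[of p "z + w"] by simp
        also have "\<dots> \<le> (norm z + r) * (norm v)^2"
          using nz np[of v] r0 by (intro mult_mono) (auto simp: p_def)
        finally show "p \<bullet> (X *v p) \<le> (norm z + r) * (norm v)^2" .
      qed
      have qXq: "0 \<le> q \<bullet> (X *v q)" "q \<bullet> (X *v q) \<le> r * (norm v)^2"
      proof -
        show "0 \<le> q \<bullet> (X *v q)" by (rule psd_quad[OF psdX])
        have "q \<bullet> (X *v q) \<le> q \<bullet> ((z + w) *v q)" by (rule quad_le_of_psd_diff[OF psdX'])
        also have "\<dots> = q \<bullet> (w *v q)" using zq by (simp add: matrix_vector_mult_add_rdistrib inner_add_right)
        also have "\<dots> \<le> r * (norm q)^2" using quad_le_norm[of q w] by (simp add: r_def)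
        also have "\<dots> \<le> r * (norm v)^2" using r0 nq[of v] by (intro mult_left_mono) (auto simp: q_def)
        finally show "q \<bullet> (X *v q) \<le> r * (norm v)^2" .
      qed
      have pXq: "\<bar>p \<bullet> (X *v q)\<bar> \<le> S * (norm v)^2"
      proof -
        have "(p \<bullet> (X *v q))^2 \<le> (p \<bullet> (X *v p)) * (q \<bullet> (X *v q))" by (rule psd_cs[OF psdX])
        also have "\<dots> \<le> ((norm z + r) * (norm v)^2) * (r * (norm v)^2)"
          using pXp qXq by (intro mult_mono) auto
        also have "\<dots> = (S * (norm v)^2)^2" using r0 by (simp add: S_def power_mult_distrib algebra_simps)
        finally have "\<bar>p \<bullet> (X *v q)\<bar>^2 \<le> (S * (norm v)^2)^2" by simp
        moreover have "0 \<le> S * (norm v)^2" using r0 by (simp add: S_def)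
        ultimately show ?thesis by (rule power2_le_imp_le)
      qed
      have rS: "r \<le> S"
      proof -
        have "r = sqrt (r * r)" using r0 by simp
        also have "\<dots> \<le> S" unfolding S_def using r0 by (intro real_sqrt_le_mono mult_right_mono) auto
        finally show ?thesis .
      qed
      have vX: "v \<bullet> (X *v v) = p \<bullet> (X *v p) + 2 * (p \<bullet> (X *v q)) + q \<bullet> (X *v q)"
        using quad_expand[OF symX, of p 1 q] vpq[of v] sym_dot[OF symX, of p q] by (simp add: p_def q_def)
      have vF: "v \<bullet> (F X *v v) = t2 * (p \<bullet> (X *v p)) + th X * (v \<bullet> (Rm *v v))"
        by (simp add: F_def matrix_vector_mult_add_rdistrib scaleR_mat_vec inner_add_right cong_quad Pv p_def)
      have "v \<bullet> (G X *v v) = (1 - t2) * (p \<bullet> (X *v p)) + 2 * (p \<bullet> (X *v q)) + q \<bullet> (X *v q) - th X * (v \<bullet> (Rm *v v))"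
        by (simp add: G_def matrix_vector_mult_diff_rdistrib inner_diff_right vX vF algebra_simps)
      also have "\<bar>\<dots>\<bar> \<le> 4 * (sqrt r / sqrt m * (norm z + r) + S) * (norm v)^2"
        by (rule real_bound[OF pXp qXq pXq thX Rm_abs]) (use t20 one_minus_t2[OF m0 r0] t2e rS r0 in auto)
      also have "\<dots> \<le> (4 * K) * (norm v)^2"
        using Kge by (intro mult_right_mono) (auto simp: S_def)
      finally show ?thesis .
    qed
    then have "norm (G X) \<le> 3 * (4 * K) * real CARD('n)^2" by (rule mat_bound[OF symG])
    then show ?thesis by (simp add: X_def algebra_simps)
  qed
  have "(\<lambda>s. norm (G (\<pi> s))) integrable_on {0..1} \<and> integral {0..1} (\<lambda>s. norm (G (\<pi> s))) \<le> 12 * real CARD('n)^2 * K"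
    by (rule path_norm_integral[OF pip linG bound])
  then show ?thesis using pi'p by (intro bexI[of _ \<pi>']) (auto simp: G_def \<pi>'_def K_def r_def)
qed


lemma main_z0:
  fixes w :: "real^'n^'n"
  assumes w: "psd w" and pi: "\<pi> \<in> paths_to w"
  shows "\<exists>\<pi>'\<in>paths_to 0. (\<lambda>s. norm (\<pi> s - \<pi>' s)) integrable_on {0..1} \<and>
           integral {0..1} (\<lambda>s. norm (\<pi> s - \<pi>' s)) \<le> 12 * real CARD('n)^2 * Kfun 0 (norm w)"
proof -
  have pip: "\<pi> \<in> paths" and pi1: "\<pi> 1 = w" using pi by (auto simp: paths_to_def)
  have lin0: "linear (\<lambda>X::real^'n^'n. 0::real^'n^'n)" by (intro linearI) auto
  have "(\<lambda>s. (\<lambda>X::real^'n^'n. 0::real^'n^'n) (\<pi> s)) \<in> paths"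
    by (rule path_image[OF pip lin0]) (simp add: psd_zero)
  then have p0: "(\<lambda>s. 0::real^'n^'n) \<in> paths_to 0" by (simp add: paths_to_def)
  have linI: "linear (\<lambda>X::real^'n^'n. X)" by (intro linearI) auto
  have bound: "norm (\<pi> s) \<le> 12 * real CARD('n)^2 * norm w" if s: "s \<in> {0..1}" for s
  proof -
    have psdX: "psd (\<pi> s)" using paths_D(1)[OF pip s] .
    have psdX': "psd (w - \<pi> s)" using paths_D(2)[OF pip, of s 1] s pi1 by simp
    have "\<bar>v \<bullet> (\<pi> s *v v)\<bar> \<le> norm w * (norm v)^2" for v
    proof -
      have "v \<bullet> (\<pi> s *v v) \<le> v \<bullet> (w *v v)" by (rule quad_le_of_psd_diff[OF psdX'])
      also have "\<dots> \<le> norm w * (norm v)^2" using quad_le_norm[of v w] by (rule order_trans[OF abs_ge_self])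
      finally show ?thesis using psd_quad[OF psdX, of v] by simp
    qed
    then have "norm (\<pi> s) \<le> 3 * norm w * real CARD('n)^2" by (rule mat_bound[OF psd_sym[OF psdX]])
    also have "\<dots> \<le> 12 * real CARD('n)^2 * norm w" by simp
    finally show ?thesis .
  qed
  have "(\<lambda>s. norm (\<pi> s)) integrable_on {0..1} \<and> integral {0..1} (\<lambda>s. norm (\<pi> s)) \<le> 12 * real CARD('n)^2 * norm w"
    by (rule path_norm_integral[OF pip linI bound])
  then show ?thesis using p0 by (intro bexI[of _ "\<lambda>s. 0"]) (auto simp: Kfun_def)
qed

theorem lemma3p5:
  "\<exists>C::real. \<forall>(w::real^'n^'n) z \<pi>. psd w \<longrightarrow> psd z \<longrightarrow> \<pi> \<in> paths_to (z + w) \<longrightarrow>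
     (\<exists>\<pi>'\<in>paths_to z.
        (\<lambda>s. frob_norm (\<pi> s - \<pi>' s)) integrable_on {0..1} \<and>
        integral {0..1} (\<lambda>s. frob_norm (\<pi> s - \<pi>' s)) \<le> C * Kfun z (frob_norm w))"
proof (intro exI[of _ "12 * real CARD('n)^2"] allI impI)
  fix w z :: "real^'n^'n" and \<pi> :: "real \<Rightarrow> real^'n^'n"
  assume w: "psd w" and z: "psd z" and pi: "\<pi> \<in> paths_to (z + w)"
  show "\<exists>\<pi>'\<in>paths_to z. (\<lambda>s. frob_norm (\<pi> s - \<pi>' s)) integrable_on {0..1} \<and>
        integral {0..1} (\<lambda>s. frob_norm (\<pi> s - \<pi>' s)) \<le> 12 * real CARD('n)^2 * Kfun z (frob_norm w)"
  proof (cases "z = 0")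
    case True
    then show ?thesis using main_z0[OF w] pi by (simp add: frob_norm_eq)
  next
    case False
    then show ?thesis using main_nz[OF w z False pi] by (simp add: frob_norm_eq)
  qed
qed

end
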